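(* For any $(u,z,\mathcal R,\dot{\mathcal R})$ (with $u\in L^2(B_1)$ radial and $z,\mathcal R,\dot{\mathcal R}\in\mathbb R$) satisfying the linearized constant-mass condition $\int_{B_1}u\,dx=-\frac{4\pi}3z-4\pi\frac{\rho_*}{R_*}\mathcal R$, the linearized total energy \[ \mathcal E^L_{\rm total}=-4\pi\sigma\mathcal R^2-4\pi R_gT_\infty R_*^2\mathcal Rz-\frac{2\pi R_gT_\infty R_*^3}{3\rho_*}z^2+\frac{c_v\gamma T_\infty R_*^3}{2\rho_*}\int_{B_1}u^2dx+2\pi\rho_lR_*^3\dot{\mathcal R}^2 \] satisfies \[ \mathcal E^L_{\rm total}\ge2\pi(4\sigma+3p_{\infty,*}R_* )\mathcal R^2+\frac{c_vT_\infty R_*^3}{2\rho_*}\int_{B_1}u^2dx+2\pi\rho_lR_*^3\dot{\mathcal R}^2. \]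
   Context: Parameters: $\gamma>1$, $c_v>0$, $R_g>0$ with $\gamma c_v=c_v+R_g$; $T_\infty>0$, $p_{\infty,*}>0$, $\sigma>0$, $\rho_l>0$; $\rho_*,R_*>0$ satisfy $R_gT_\infty\rho_*=p_{\infty,*}+2\sigma/R_*$. $B_1$ is the unit ball of $\mathbb R^3$. *)

theory Defs
  imports "HOL-Analysis.Analysis"
begin

end

theory Submission imports Defs "HOL-Analysis.Analysis" begin
lemma V: "measure lborel (ball (0::real^3) 1) = 4*pi/3"
proof -
  have "emeasure lborel (ball (0::real^3) 1) = ennreal (unit_ball_vol 3)"
    using emeasure_ball[where c="0::real^3" and r=1] by simp
  moreover have "unit_ball_vol 3 = 4*pi/3"
    using unit_ball_vol_odd[of 1] by (simp add: numeral_3_eq_3)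
  ultimately show ?thesis by (simp add: measure_def)
qed
lemma CS:
  fixes u :: "real^3 \<Rightarrow> real" and B c
  assumes B: "B = ball (0::real^3) 1"
    and u_meas: "set_borel_measurable lborel B u"
    and u_L2: "set_integrable lborel B (\<lambda>x. (u x)^2)"
  shows "0 \<le> (\<integral>x\<in>B. (u x)^2 \<partial>lborel) - 2*c*(\<integral>x\<in>B. u x \<partial>lborel) + c^2 * (4*pi/3)"
proof -
  have Bs: "B \<in> sets lborel" using B by simp
  have Bf: "emeasure lborel B \<noteq> \<infinity>" using B emeasure_ball[where c="0::real^3" and r=1] by simp
  have i1: "set_integrable lborel B (\<lambda>x. 1::real)"
    unfolding set_integrable_def using Bs Bf by (simp add: less_top)
  have i2: "set_integrable lborel B (\<lambda>x. 1 + (u x)^2)" using i1 u_L2 by simp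
  have iu: "set_integrable lborel B u"
  proof (rule set_integrable_bound[OF i2 u_meas])
    have "\<And>y::real. \<bar>y\<bar> \<le> \<bar>1 + y^2\<bar>"
    proof -
      fix y :: real
      have "0 \<le> (\<bar>y\<bar> - 1)^2" by simp
      hence "2*\<bar>y\<bar> \<le> 1 + y^2" by (simp add: power2_eq_square algebra_simps)
      thus "\<bar>y\<bar> \<le> \<bar>1 + y^2\<bar>" by simp
    qed
    thus "AE x in lborel. x \<in> B \<longrightarrow> norm (u x) \<le> norm (1 + (u x)^2)"
      by simp
  qed
  have iu2: "set_integrable lborel B (\<lambda>x. 2*c*u x)" using iu by (rule set_integrable_mult_right)
  have ic: "set_integrable lborel B (\<lambda>x. c^2)" using i1 set_integrable_mult_right[OF i1, of "c^2"] by simp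
  have id: "set_integrable lborel B (\<lambda>x. (u x)^2 - 2*c*u x)" using u_L2 iu2 by (rule set_integral_diff)
  have iq: "set_integrable lborel B (\<lambda>x. (u x)^2 - 2*c*u x + c^2)"
    by (rule set_integral_add(1)[OF id ic])
  have i0: "set_integrable lborel B (\<lambda>x. 0::real)" by (simp add: set_integrable_def)
  have "(\<integral>x\<in>B. 0 \<partial>lborel) \<le> (\<integral>x\<in>B. (u x)^2 - 2*c*u x + c^2 \<partial>lborel)"
  proof (rule set_integral_mono[OF i0 iq])
    fix x have "0 \<le> (u x - c)^2" by simp
    thus "0 \<le> (u x)^2 - 2*c*u x + c^2" by (simp add: power2_diff algebra_simps)
  qed
  also have "\<dots> = (\<integral>x\<in>B. (u x)^2 \<partial>lborel) - 2*c*(\<integral>x\<in>B. u x \<partial>lborel) + (\<integral>x\<in>B. c^2 \<partial>lborel)"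
    using set_integral_add(2)[OF id ic] set_integral_diff(2)[OF u_L2 iu2] by simp
  also have "(\<integral>x\<in>B. c^2 \<partial>lborel) = c^2 * (4*pi/3)"
    using set_integral_const[OF Bs Bf, of "c^2"] B V by simp
  finally show ?thesis by (simp add: set_lebesgue_integral_def)
qed
theorem proposition3p5:
  fixes \<gamma> c_v R_g T_inf p_inf \<sigma> \<rho>_l \<rho>_s R_s z RR RRdot :: real
    and u :: "real^3 \<Rightarrow> real"
  assumes "\<gamma> > 1" "c_v > 0" "R_g > 0" "\<gamma> * c_v = c_v + R_g"
    and "T_inf > 0" "p_inf > 0" "\<sigma> > 0" "\<rho>_l > 0" "\<rho>_s > 0" "R_s > 0"
    and "R_g * T_inf * \<rho>_s = p_inf + 2 * \<sigma> / R_s"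
    and u_meas: "set_borel_measurable lborel (ball 0 1) u"
    and u_L2: "set_integrable lborel (ball 0 1) (\<lambda>x. (u x)^2)"
    and u_radial: "\<forall>x\<in>ball 0 1. \<forall>y\<in>ball 0 1. norm x = norm y \<longrightarrow> u x = u y"
    and mass: "(\<integral>x\<in>ball 0 1. u x \<partial>lborel) = - (4 * pi / 3) * z - 4 * pi * (\<rho>_s / R_s) * RR"
  shows "- 4 * pi * \<sigma> * RR^2 - 4 * pi * R_g * T_inf * R_s^2 * RR * z
           - (2 * pi * R_g * T_inf * R_s^3) / (3 * \<rho>_s) * z^2
           + (c_v * \<gamma> * T_inf * R_s^3) / (2 * \<rho>_s) * (\<integral>x\<in>ball 0 1. (u x)^2 \<partial>lborel)
           + 2 * pi * \<rho>_l * R_s^3 * RRdot^2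
         \<ge> 2 * pi * (4 * \<sigma> + 3 * p_inf * R_s) * RR^2
           + (c_v * T_inf * R_s^3) / (2 * \<rho>_s) * (\<integral>x\<in>ball 0 1. (u x)^2 \<partial>lborel)
           + 2 * pi * \<rho>_l * R_s^3 * RRdot^2"
  proof -
  define I where "I = (\<integral>x\<in>ball 0 1. (u x)^2 \<partial>lborel)"
  define k where "k = 3 * \<rho>_s * RR / R_s"
  have M: "(\<integral>x\<in>ball 0 1. u x \<partial>lborel) = - (4*pi/3) * (z + k)"
    using mass assms(9,10) by (simp add: k_def field_simps)
  have "0 \<le> I - 2*(-(z+k))*(- (4*pi/3) * (z + k)) + (-(z+k))^2 * (4*pi/3)"
    using CS[OF refl u_meas u_L2, of "-(z+k)"] M by (simp add: I_def)
  moreover have "I - 2*(-(z+k))*(- (4*pi/3) * (z + k)) + (-(z+k))^2 * (4*pi/3) = I - (4*pi/3)*(z+k)^2"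
    by (simp add: power2_eq_square field_simps)
  ultimately have key: "0 \<le> I - (4*pi/3)*(z+k)^2" by linarith
  have K: "0 \<le> R_g * (T_inf * R_s^3 / (2*\<rho>_s)) * (I - (4*pi/3)*(z+k)^2)"
    using key assms by simp
  have p: "p_inf = R_g * T_inf * \<rho>_s - 2 * \<sigma> / R_s" using assms(11) by simp
  have g: "c_v * \<gamma> = c_v + R_g" using assms(4) by (simp add: mult.commute)
  have E: "(- 4 * pi * \<sigma> * RR^2 - 4 * pi * R_g * T_inf * R_s^2 * RR * z
           - (2 * pi * R_g * T_inf * R_s^3) / (3 * \<rho>_s) * z^2
           + (c_v * \<gamma> * T_inf * R_s^3) / (2 * \<rho>_s) * I
           + 2 * pi * \<rho>_l * R_s^3 * RRdot^2)
         - (2 * pi * (4 * \<sigma> + 3 * p_inf * R_s) * RR^2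
           + (c_v * T_inf * R_s^3) / (2 * \<rho>_s) * I
           + 2 * pi * \<rho>_l * R_s^3 * RRdot^2)
       = R_g * (T_inf * R_s^3 / (2*\<rho>_s)) * (I - (4*pi/3)*(z+k)^2)"
    unfolding p k_def using assms(9,10) g
    by (simp add: field_simps power2_eq_square power3_eq_cube)
  show ?thesis using E K unfolding I_def by linarith
qed

end
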